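(* Let $T=(A_1;A_2;\dots;A_p)$ be an $n\times p\times n$ quaternion tensor whose first frontal slice $A_1\in M_n(\mathbb{H})$ is invertible. Then $\mathrm{rank}(T)=n$ if and only if the matrices $A_jA_1^{-1}$, $j=2,\dots,p$, are simultaneously diagonalizable, i.e. there is an invertible $P\in M_n(\mathbb{H})$ such that $P^{-1}A_jA_1^{-1}P$ is a diagonal (quaternion) matrix for every $j=2,\dots,p$.
   Context: $\mathbb{H}$ denotes the real quaternions. An $n_1\times n_2\times n_3$ quaternion tensor is an array $T=(T_{ijk})$ with entries in $\mathbb{H}$, $1\le i\le n_1$, $1\le j\le n_2$, $1\le k\le n_3$; it is written $T=(A_1;\dots;A_{n_2})$ where the frontal slice $A_j$ is the $n_1\times n_3$ matrix $(T_{ijk})_{i,k}$. A nonzero tensor is simple if $T_{ijk}=a_ib_jc_k$ (quaternion product in this order) for some $\vec a\in\mathbb{H}^{n_1},\vec b\in\mathbb{H}^{n_2},\vec c\in\mathbb{H}^{n_3}$. The rank of $T$ is the least number of simple tensors summing to $T$. *)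

theory Defs
  imports Complex_Main
begin

datatype quat = Quat (Re: real) (Im1: real) (Im2: real) (Im3: real)

lemma quat_eq_iff: "x = y \<longleftrightarrow> Re x = Re y \<and> Im1 x = Im1 y \<and> Im2 x = Im2 y \<and> Im3 x = Im3 y"
  by (cases x; cases y) auto

instantiation quat :: ring_1
begin

definition "0 = Quat 0 0 0 0"
definition "1 = Quat 1 0 0 0"
definition "x + y = Quat (Re x + Re y) (Im1 x + Im1 y) (Im2 x + Im2 y) (Im3 x + Im3 y)"
definition "x - y = Quat (Re x - Re y) (Im1 x - Im1 y) (Im2 x - Im2 y) (Im3 x - Im3 y)"
definition "- x = Quat (- Re x) (- Im1 x) (- Im2 x) (- Im3 x)"
definition "x * y = Quat
   (Re x * Re y - Im1 x * Im1 y - Im2 x * Im2 y - Im3 x * Im3 y)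
   (Re x * Im1 y + Im1 x * Re y + Im2 x * Im3 y - Im3 x * Im2 y)
   (Re x * Im2 y - Im1 x * Im3 y + Im2 x * Re y + Im3 x * Im1 y)
   (Re x * Im3 y + Im1 x * Im2 y - Im2 x * Im1 y + Im3 x * Re y)"

instance
  by standard
    (auto simp: quat_eq_iff zero_quat_def one_quat_def plus_quat_def minus_quat_def
       uminus_quat_def times_quat_def algebra_simps)

end

section \<open>Quaternion matrices (n x n, 0-based indices, entries outside the range irrelevant)\<close>

type_synonym qmat = "nat \<Rightarrow> nat \<Rightarrow> quat"

definition qmat_mult :: "nat \<Rightarrow> qmat \<Rightarrow> qmat \<Rightarrow> qmat" where
  "qmat_mult n A B = (\<lambda>i k. \<Sum>l<n. A i l * B l k)"

definition qmat_id :: qmat where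
  "qmat_id = (\<lambda>i k. if i = k then 1 else 0)"

definition qmat_eq :: "nat \<Rightarrow> qmat \<Rightarrow> qmat \<Rightarrow> bool" where
  "qmat_eq n A B \<longleftrightarrow> (\<forall>i<n. \<forall>k<n. A i k = B i k)"

definition qmat_inverse_of :: "nat \<Rightarrow> qmat \<Rightarrow> qmat \<Rightarrow> bool" where
  "qmat_inverse_of n A B \<longleftrightarrow>
     qmat_eq n (qmat_mult n A B) qmat_id \<and> qmat_eq n (qmat_mult n B A) qmat_id"

definition qmat_invertible :: "nat \<Rightarrow> qmat \<Rightarrow> bool" where
  "qmat_invertible n A \<longleftrightarrow> (\<exists>B. qmat_inverse_of n A B)"

definition qmat_inv :: "nat \<Rightarrow> qmat \<Rightarrow> qmat" where
  "qmat_inv n A = (SOME B. qmat_inverse_of n A B)"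

definition qmat_diagonal :: "nat \<Rightarrow> qmat \<Rightarrow> bool" where
  "qmat_diagonal n M \<longleftrightarrow> (\<forall>i<n. \<forall>k<n. i \<noteq> k \<longrightarrow> M i k = 0)"

type_synonym qtensor = "nat \<Rightarrow> nat \<Rightarrow> nat \<Rightarrow> quat"

definition simple_qtensor :: "nat \<Rightarrow> nat \<Rightarrow> nat \<Rightarrow> qtensor \<Rightarrow> bool" where
  "simple_qtensor n1 n2 n3 S \<longleftrightarrow>
     (\<exists>i<n1. \<exists>j<n2. \<exists>k<n3. S i j k \<noteq> 0) \<and>
     (\<exists>a b c :: nat \<Rightarrow> quat. \<forall>i<n1. \<forall>j<n2. \<forall>k<n3. S i j k = a i * b j * c k)"

definition qtensor_rank :: "nat \<Rightarrow> nat \<Rightarrow> nat \<Rightarrow> qtensor \<Rightarrow> nat" where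
  "qtensor_rank n1 n2 n3 T = (LEAST r. \<exists>S :: nat \<Rightarrow> qtensor.
      (\<forall>l<r. simple_qtensor n1 n2 n3 (S l)) \<and>
      (\<forall>i<n1. \<forall>j<n2. \<forall>k<n3. T i j k = (\<Sum>l<r. S l i j k)))"

text \<open>Frontal slice j (0-based) of T: the matrix (T i j k)_{i,k}.\<close>
definition frontal_slice :: "qtensor \<Rightarrow> nat \<Rightarrow> qmat" where
  "frontal_slice T j = (\<lambda>i k. T i j k)"

end

theory Submission imports Defs "Jordan_Normal_Form.Determinant" begin

definition qn :: "quat \<Rightarrow> real" where
 "qn q = (Re q)^2 + (Im1 q)^2 + (Im2 q)^2 + (Im3 q)^2"

lemma qn_mult: "qn (p*q) = qn p * qn q"
  unfolding qn_def times_quat_def by (simp add: power2_eq_square algebra_simps)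

lemma qn_zero: "qn q = 0 \<longleftrightarrow> q = 0"
  unfolding qn_def zero_quat_def quat_eq_iff
  by (smt (verit, best) quat.sel sum_power2_eq_zero_iff zero_le_power2)

lemma quat_no_zero_div: "(p::quat) * q = 0 \<Longrightarrow> p = 0 \<or> q = 0"
  by (metis qn_mult qn_zero mult_eq_0_iff)

definition comp :: "nat \<Rightarrow> quat \<Rightarrow> real" where
 "comp a q = (if a = 0 then Re q else if a = 1 then Im1 q else if a = 2 then Im2 q else Im3 q)"
definition eb :: "nat \<Rightarrow> quat" where
 "eb b = (if b = 0 then Quat 1 0 0 0 else if b = 1 then Quat 0 1 0 0 else if b = 2 then Quat 0 0 1 0 else Quat 0 0 0 1)"
definition Lq :: "quat \<Rightarrow> nat \<Rightarrow> nat \<Rightarrow> real" where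
 "Lq q a b = comp a (q * eb b)"

lemma less4: "(a::nat) < 4 \<longleftrightarrow> a = 0 \<or> a = 1 \<or> a = 2 \<or> a = 3" by auto

lemma sum4: fixes f :: "nat \<Rightarrow> 'a::comm_monoid_add" shows "(\<Sum>c<4. f c) = f 0 + f 1 + f 2 + (f 3 :: 'a::comm_monoid_add)"
  by (simp add: numeral_eq_Suc add.assoc add.commute add.left_commute)

lemma Lq_mult: "a < 4 \<Longrightarrow> b < 4 \<Longrightarrow> Lq (p*q) a b = (\<Sum>c<4. Lq p a c * Lq q c b)"
  unfolding sum4 less4
  by (auto simp: Lq_def comp_def eb_def times_quat_def algebra_simps)

lemma Lq_add: "Lq (p+q) a b = Lq p a b + Lq q a b"
  by (auto simp: Lq_def comp_def eb_def times_quat_def plus_quat_def algebra_simps)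

lemma Lq_zero: "Lq 0 a b = 0"
  by (auto simp: Lq_def comp_def eb_def times_quat_def zero_quat_def)

lemma Lq_sum: "Lq (sum f S) a b = (\<Sum>x\<in>S. Lq (f x) a b)"
  by (induction S rule: infinite_finite_induct) (auto simp: Lq_zero Lq_add)

lemma Lq_one: "a < 4 \<Longrightarrow> b < 4 \<Longrightarrow> Lq 1 a b = (if a = b then 1 else 0)"
  unfolding less4 by (auto simp: Lq_def comp_def eb_def times_quat_def one_quat_def)

lemma Lq_0: "Lq q a 0 = comp a q"
  by (simp add: Lq_def eb_def flip: one_quat_def)

lemma Lq_inj: assumes "\<And>a. a < 4 \<Longrightarrow> Lq p a 0 = Lq q a 0" shows "p = q"
proof -
  have "comp 0 p = comp 0 q" "comp 1 p = comp 1 q" "comp 2 p = comp 2 q" "comp 3 p = comp 3 q"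
    using assms[of 0] assms[of 1] assms[of 2] assms[of 3] by (simp_all add: Lq_0)
  thus ?thesis unfolding quat_eq_iff comp_def by simp
qed


definition emb :: "quat mat \<Rightarrow> real mat" where
 "emb A = mat (4*dim_row A) (4*dim_col A) (\<lambda>(u,v). Lq (A $$ (u div 4, v div 4)) (u mod 4) (v mod 4))"

lemma sum_group4: fixes g :: "nat \<Rightarrow> 'a::comm_monoid_add" shows "(\<Sum>w<4*m. g w) = (\<Sum>l<m. \<Sum>c<4. g (4*l+c))"
proof -
  have "(\<Sum>w<m*4. g w) = (\<Sum>l<m. sum g {l*4..<l*4+4})" by (rule sum.nat_group[symmetric])
  also have "\<dots> = (\<Sum>l<m. \<Sum>c<4. g (4*l+c))"
  proof (rule sum.cong[OF refl])
    fix l show "sum g {l*4..<l*4+4} = (\<Sum>c<4. g (4*l+c))"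
      using sum.shift_bounds_nat_ivl[of g 0 "l*4" 4]
      by (simp add: atLeast0LessThan mult.commute add.commute)
  qed
  finally show ?thesis by (simp add: mult.commute)
qed

lemma emb_mult: assumes "A \<in> carrier_mat n m" "B \<in> carrier_mat m k"
  shows "emb (A * B) = emb A * emb B"
proof (rule eq_matI)
  fix u v assume uv: "u < dim_row (emb A * emb B)" "v < dim_col (emb A * emb B)"
  hence u: "u < 4*n" and v: "v < 4*k" using assms by (auto simp: emb_def)
  hence ud: "u div 4 < n" and vd: "v div 4 < k" by auto
  have um: "u mod 4 < 4" and vm: "v mod 4 < 4" by auto
  have "emb (A*B) $$ (u,v) = Lq (\<Sum>l\<in>{0..<m}. A $$ (u div 4, l) * B $$ (l, v div 4)) (u mod 4) (v mod 4)"
    using assms u v ud vd by (simp add: emb_def scalar_prod_def)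
  also have "\<dots> = (\<Sum>l<m. \<Sum>c<4. Lq (A $$ (u div 4, l)) (u mod 4) c * Lq (B $$ (l, v div 4)) c (v mod 4))"
    by (simp add: Lq_sum Lq_mult[OF um vm] atLeast0LessThan)
  also have "\<dots> = (\<Sum>w<4*m. emb A $$ (u, w) * emb B $$ (w, v))"
    unfolding sum_group4 using assms u v by (intro sum.cong refl) (auto simp: emb_def)
  also have "\<dots> = (emb A * emb B) $$ (u,v)"
    using assms u v by (simp add: emb_def scalar_prod_def atLeast0LessThan)
  finally show "emb (A*B) $$ (u,v) = (emb A * emb B) $$ (u,v)" .
qed (use assms in \<open>auto simp: emb_def\<close>)

lemma emb_one: "emb (1\<^sub>m n) = 1\<^sub>m (4*n)"
proof (rule eq_matI)
  fix u v assume "u < dim_row (1\<^sub>m (4*n) :: real mat)" "v < dim_col (1\<^sub>m (4*n) :: real mat)"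
  hence u: "u < 4*n" and v: "v < 4*n" by auto
  have "u = v \<longleftrightarrow> u div 4 = v div 4 \<and> u mod 4 = v mod 4"
    by (metis div_mult_mod_eq)
  thus "emb (1\<^sub>m n) $$ (u,v) = 1\<^sub>m (4*n) $$ (u,v)"
    using u v by (auto simp: emb_def Lq_one Lq_zero)
qed (auto simp: emb_def)

lemma emb_inj: assumes "A \<in> carrier_mat n k" "B \<in> carrier_mat n k" "emb A = emb B"
  shows "A = B"
proof (rule eq_matI)
  fix i j assume ij: "i < dim_row B" "j < dim_col B"
  show "A $$ (i,j) = B $$ (i,j)"
  proof (rule Lq_inj)
    fix a :: nat assume a: "a < 4"
    have d: "(4*i+a) div 4 = i" "(4*i+a) mod 4 = a" "(4*j) div 4 = j" "(4*j) mod 4 = 0" using a by auto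
    have b: "4*i+a < 4*n" "4*j < 4*k" using assms ij a by auto
    have "emb A $$ (4*i+a, 4*j) = emb B $$ (4*i+a, 4*j)" using assms by simp
    thus "Lq (A $$ (i, j)) a 0 = Lq (B $$ (i, j)) a 0" using assms b unfolding emb_def
      by (simp only: index_mat[OF b] carrier_matD case_prod_conv d)
  qed
qed (use assms in auto)

lemma K1: assumes "(A :: quat mat) \<in> carrier_mat n n" "B \<in> carrier_mat n n" "A * B = 1\<^sub>m n"
  shows "B * A = 1\<^sub>m n"
proof -
  have c: "emb A \<in> carrier_mat (4*n) (4*n)" "emb B \<in> carrier_mat (4*n) (4*n)"
    using assms by (auto simp: emb_def)
  have "emb A * emb B = 1\<^sub>m (4*n)" using assms emb_mult emb_one by metis
  hence "emb B * emb A = 1\<^sub>m (4*n)" by (rule mat_mult_left_right_inverse[OF c])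
  hence "emb (B * A) = emb (1\<^sub>m n)" using assms emb_mult emb_one by metis
  thus ?thesis by (rule emb_inj[of _ n n, rotated 2]) (use assms in auto)
qed


definition tm :: "nat \<Rightarrow> qmat \<Rightarrow> quat mat" where "tm n A = mat n n (\<lambda>(i,k). A i k)"
definition fm :: "quat mat \<Rightarrow> qmat" where "fm M = (\<lambda>i k. M $$ (i,k))"

lemma tm_carrier[simp]: "tm n A \<in> carrier_mat n n" by (simp add: tm_def)
lemma tm_dims[simp]: "dim_row (tm n A) = n" "dim_col (tm n A) = n" by (simp_all add: tm_def)
lemma tm_index[simp]: "i<n \<Longrightarrow> k<n \<Longrightarrow> tm n A $$ (i,k) = A i k" by (simp add: tm_def)

lemma tm_mult: "tm n (qmat_mult n A B) = tm n A * tm n B"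
  by (rule eq_matI) (auto simp: tm_def qmat_mult_def scalar_prod_def atLeast0LessThan intro!: sum.cong)

lemma tm_id: "tm n qmat_id = 1\<^sub>m n"
  by (rule eq_matI) (auto simp: tm_def qmat_id_def)

lemma tm_eq: "qmat_eq n A B \<longleftrightarrow> tm n A = tm n B"
  by (auto simp: qmat_eq_def mat_eq_iff tm_def)

lemma tm_diag: "qmat_diagonal n M \<longleftrightarrow> diagonal_mat (tm n M)"
  by (auto simp: qmat_diagonal_def diagonal_mat_def)

lemma tm_fm: "M \<in> carrier_mat n n \<Longrightarrow> tm n (fm M) = M"
  by (rule eq_matI) (auto simp: tm_def fm_def)

lemma inverse_of_tm: "qmat_inverse_of n A B \<longleftrightarrow> tm n A * tm n B = 1\<^sub>m n \<and> tm n B * tm n A = 1\<^sub>m n"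
  by (simp add: qmat_inverse_of_def tm_eq tm_mult tm_id)

lemma invertible_tm: "qmat_invertible n A \<longleftrightarrow> (\<exists>B \<in> carrier_mat n n. tm n A * B = 1\<^sub>m n)"
proof
  assume "qmat_invertible n A"
  then obtain B where "qmat_inverse_of n A B" by (auto simp: qmat_invertible_def)
  thus "\<exists>B \<in> carrier_mat n n. tm n A * B = 1\<^sub>m n" by (auto simp: inverse_of_tm)
next
  assume "\<exists>B \<in> carrier_mat n n. tm n A * B = 1\<^sub>m n"
  then obtain B where B: "B \<in> carrier_mat n n" "tm n A * B = 1\<^sub>m n" by auto
  hence "B * tm n A = 1\<^sub>m n" using K1 tm_carrier by blast
  hence "qmat_inverse_of n A (fm B)" using B by (simp add: inverse_of_tm tm_fm)
  thus "qmat_invertible n A" by (auto simp: qmat_invertible_def)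
qed

lemma inv_tm: assumes "qmat_invertible n A"
  shows "tm n A * tm n (qmat_inv n A) = 1\<^sub>m n" "tm n (qmat_inv n A) * tm n A = 1\<^sub>m n"
proof -
  have "qmat_inverse_of n A (qmat_inv n A)"
    using assms unfolding qmat_invertible_def qmat_inv_def by (rule someI_ex)
  thus "tm n A * tm n (qmat_inv n A) = 1\<^sub>m n" "tm n (qmat_inv n A) * tm n A = 1\<^sub>m n"
    by (auto simp: inverse_of_tm)
qed

lemma sum_single: assumes "k \<in> S" "finite S" "\<And>m. m \<in> S \<Longrightarrow> m \<noteq> k \<Longrightarrow> f m = 0"
  shows "sum f S = f k"
proof -
  have "sum f S = f k + sum f (S - {k})" using assms by (simp add: sum.remove)
  also have "sum f (S - {k}) = 0" using assms by (intro sum.neutral) auto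
  finally show ?thesis by simp
qed

lemma diag_mult_left: assumes "D \<in> carrier_mat n n" "diagonal_mat D" "E \<in> carrier_mat n m" "i < n" "k < m"
  shows "(D * E) $$ (i,k) = D $$ (i,i) * E $$ (i,k)"
proof -
  have "(D * E) $$ (i,k) = (\<Sum>l\<in>{0..<n}. D $$ (i,l) * E $$ (l,k))"
    using assms by (simp add: scalar_prod_def)
  also have "\<dots> = D $$ (i,i) * E $$ (i,k)"
    using assms by (intro sum_single) (auto simp: diagonal_mat_def)
  finally show ?thesis .
qed

lemma diag_mult_right: assumes "D \<in> carrier_mat n n" "diagonal_mat D" "E \<in> carrier_mat m n" "i < m" "k < n"
  shows "(E * D) $$ (i,k) = E $$ (i,k) * D $$ (k,k)"
proof -
  have "(E * D) $$ (i,k) = (\<Sum>l\<in>{0..<n}. E $$ (i,l) * D $$ (l,k))"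
    using assms by (simp add: scalar_prod_def)
  also have "\<dots> = E $$ (i,k) * D $$ (k,k)"
    using assms by (intro sum_single) (auto simp: diagonal_mat_def)
  finally show ?thesis .
qed

lemma diag_mult: assumes "D \<in> carrier_mat n n" "diagonal_mat D" "E \<in> carrier_mat n n" "diagonal_mat E"
  shows "diagonal_mat (D * E)"
  unfolding diagonal_mat_def using assms diag_mult_left[OF assms(1,2,3)]
  by (auto simp: diagonal_mat_def)


definition factored :: "nat \<Rightarrow> nat \<Rightarrow> nat \<Rightarrow> qtensor \<Rightarrow> bool" where
  "factored n1 n2 n3 S \<longleftrightarrow> (\<exists>a b c :: nat \<Rightarrow> quat. \<forall>i<n1. \<forall>j<n2. \<forall>k<n3. S i j k = a i * b j * c k)"

lemma L_drop:
  fixes r :: nat and S :: "nat \<Rightarrow> qtensor"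
  assumes "\<forall>l<r. factored n1 n2 n3 (S l)"
    and "\<forall>i<n1. \<forall>j<n2. \<forall>k<n3. T i j k = (\<Sum>l<r. S l i j k)"
  shows "\<exists>r'\<le>r. \<exists>S'. (\<forall>l<r'. simple_qtensor n1 n2 n3 (S' l)) \<and>
            (\<forall>i<n1. \<forall>j<n2. \<forall>k<n3. T i j k = (\<Sum>l<r'. S' l i j k))"
  using assms
proof (induction r arbitrary: T)
  case 0
  thus ?case by auto
next
  case (Suc r)
  define T' where "T' = (\<lambda>i j k. \<Sum>l<r. S l i j k)"
  obtain r' S' where r': "r' \<le> r" "\<forall>l<r'. simple_qtensor n1 n2 n3 (S' l)"
     "\<forall>i<n1. \<forall>j<n2. \<forall>k<n3. T' i j k = (\<Sum>l<r'. S' l i j k)"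
    using Suc.IH[of T'] Suc.prems(1) by (auto simp: T'_def)
  have T: "\<forall>i<n1. \<forall>j<n2. \<forall>k<n3. T i j k = T' i j k + S r i j k"
    using Suc.prems(2) by (simp add: T'_def)
  show ?case
  proof (cases "\<exists>i<n1. \<exists>j<n2. \<exists>k<n3. S r i j k \<noteq> 0")
    case True
    define S'' where "S'' = S'(r' := S r)"
    have sf: "simple_qtensor n1 n2 n3 X \<longleftrightarrow> (\<exists>i<n1. \<exists>j<n2. \<exists>k<n3. X i j k \<noteq> 0) \<and> factored n1 n2 n3 X" for X
      by (simp add: simple_qtensor_def factored_def)
    have "simple_qtensor n1 n2 n3 (S'' l)" if l: "l < Suc r'" for l
    proof (cases "l = r'")
      case True
      hence "S'' l = S r" by (simp add: S''_def)
      moreover have "factored n1 n2 n3 (S r)" using Suc.prems(1) by simp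
      ultimately show ?thesis using \<open>\<exists>i<n1. \<exists>j<n2. \<exists>k<n3. S r i j k \<noteq> 0\<close> sf by simp
    next
      case False
      hence "l < r'" "S'' l = S' l" using l by (auto simp: S''_def)
      thus ?thesis using r'(2) by simp
    qed
    hence "\<forall>l<Suc r'. simple_qtensor n1 n2 n3 (S'' l)" by blast
    moreover have "\<forall>i<n1. \<forall>j<n2. \<forall>k<n3. T i j k = (\<Sum>l<Suc r'. S'' l i j k)"
    proof (intro allI impI)
      fix i j k assume ijk: "i<n1" "j<n2" "k<n3"
      have "(\<Sum>l<r'. S'' l i j k) = (\<Sum>l<r'. S' l i j k)"
        by (intro sum.cong) (auto simp: S''_def)
      thus "T i j k = (\<Sum>l<Suc r'. S'' l i j k)" using T r'(3) ijk by (simp add: S''_def)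
    qed
    ultimately show ?thesis using r'(1) by (intro exI[of _ "Suc r'"]) auto
  next
    case False
    thus ?thesis using r' T by (intro exI[of _ r']) auto
  qed
qed

lemma decomp_exists:
  "\<exists>(r::nat) (S::nat \<Rightarrow> qtensor). (\<forall>l<r. simple_qtensor n1 n2 n3 (S l)) \<and>
            (\<forall>i<n1. \<forall>j<n2. \<forall>k<n3. T i j k = (\<Sum>l<r. S l i j k))"
proof -
  define S where "S = (\<lambda>t i j k. if i = t div n2 \<and> j = t mod n2 then T i j k else (0::quat))"
  have "\<forall>t<n1*n2. factored n1 n2 n3 (S t)"
  proof (intro allI impI)
    fix t
    show "factored n1 n2 n3 (S t)" unfolding factored_def S_def
      by (rule exI[of _ "\<lambda>i. if i = t div n2 then 1 else 0"],
          rule exI[of _ "\<lambda>j. if j = t mod n2 then 1 else 0"],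
          rule exI[of _ "\<lambda>k. T (t div n2) (t mod n2) k"]) auto
  qed
  moreover have "\<forall>i<n1. \<forall>j<n2. \<forall>k<n3. T i j k = (\<Sum>t<n1*n2. S t i j k)"
  proof (intro allI impI)
    fix i j k assume ijk: "i<n1" "j<n2" "k<n3"
    have c: "(i = t div n2 \<and> j = t mod n2) \<longleftrightarrow> t = i*n2 + j" for t
    proof
      assume "i = t div n2 \<and> j = t mod n2"
      thus "t = i*n2 + j" by (metis div_mult_mod_eq)
    next
      assume t: "t = i*n2 + j"
      have "n2 > 0" using ijk(2) by simp
      thus "i = t div n2 \<and> j = t mod n2" using t ijk(2) by simp
    qed
    have lt: "i*n2 + j < n1*n2"
    proof -
      have "i*n2 + j < i*n2 + n2" using ijk by simp
      also have "\<dots> = (i+1)*n2" by simp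
      also have "\<dots> \<le> n1*n2" using ijk by (intro mult_right_mono) auto
      finally show ?thesis .
    qed
    have "(\<Sum>t<n1*n2. S t i j k) = (\<Sum>t<n1*n2. if t = i*n2+j then T i j k else 0)"
      unfolding S_def c ..
    thus "T i j k = (\<Sum>t<n1*n2. S t i j k)" using lt by simp
  qed
  ultimately have "\<exists>r'\<le>n1*n2. \<exists>S'. (\<forall>l<r'. simple_qtensor n1 n2 n3 (S' l)) \<and>
            (\<forall>i<n1. \<forall>j<n2. \<forall>k<n3. T i j k = (\<Sum>l<r'. S' l i j k))" by (rule L_drop)
  thus ?thesis by blast
qed


lemma split_sum_lt: fixes f :: "nat \<Rightarrow> 'a::comm_monoid_add"
  assumes "r \<le> n" shows "(\<Sum>l\<in>{0..<n}. if l < r then f l else 0) = (\<Sum>l<r. f l)"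
proof -
  have "(\<Sum>l\<in>{0..<n}. if l < r then f l else 0) = (\<Sum>l\<in>{0..<r}. if l < r then f l else 0) + (\<Sum>l\<in>{r..<n}. if l < r then f l else 0)"
    using sum.atLeastLessThan_concat[of 0 r n "\<lambda>l. if l < r then f l else 0"] assms by simp
  also have "(\<Sum>l\<in>{r..<n}. if l < r then f l else 0) = 0" by (intro sum.neutral) auto
  also have "(\<Sum>l\<in>{0..<r}. if l < r then f l else 0) = (\<Sum>l<r. f l)"
    by (simp add: atLeast0LessThan)
  finally show ?thesis by simp
qed

lemma mult_entry: "Z \<in> carrier_mat n m \<Longrightarrow> X \<in> carrier_mat m k \<Longrightarrow> i<n \<Longrightarrow> j<k \<Longrightarrow>
  (Z*X) $$ (i,j) = (\<Sum>l\<in>{0..<m}. Z$$(i,l) * X$$(l,j))"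
  by (simp add: scalar_prod_def)

lemma L_lower:
  fixes r :: nat and S :: "nat \<Rightarrow> qtensor"
  assumes "0 < p" "qmat_invertible n (frontal_slice T 0)"
    "\<forall>l<r. factored n p n (S l)"
    "\<forall>i<n. \<forall>j<p. \<forall>k<n. T i j k = (\<Sum>l<r. S l i j k)"
  shows "n \<le> r"
proof (rule ccontr)
  assume "\<not> n \<le> r" hence rn: "r < n" by simp
  have "\<forall>l. \<exists>t. l < r \<longrightarrow> (\<forall>i<n. \<forall>j<p. \<forall>k<n. S l i j k = fst t i * fst (snd t) j * snd (snd t) k)"
  proof
    fix l show "\<exists>t. l < r \<longrightarrow> (\<forall>i<n. \<forall>j<p. \<forall>k<n. S l i j k = fst t i * fst (snd t) j * snd (snd t) k)"
    proof (cases "l < r")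
      case True
      hence "\<exists>a b c :: nat \<Rightarrow> quat. \<forall>i<n. \<forall>j<p. \<forall>k<n. S l i j k = a i * b j * c k"
        using assms(3) unfolding factored_def by simp
      then obtain a b c where "\<forall>i<n. \<forall>j<p. \<forall>k<n. S l i j k = a i * b j * c k"
        by (elim exE)
      thus ?thesis by (intro exI[of _ "(a,b,c)"]) simp
    qed simp
  qed
  from choice[OF this] obtain t where t: "\<forall>l. l < r \<longrightarrow> (\<forall>i<n. \<forall>j<p. \<forall>k<n. S l i j k = fst (t l) i * fst (snd (t l)) j * snd (snd (t l)) k)"
    by blast
  define a where "a l = fst (t l)" for l
  define b where "b l = fst (snd (t l))" for l
  define c where "c l = snd (snd (t l))" for l
  have abc: "\<And>l. l < r \<Longrightarrow> (\<forall>i<n. \<forall>j<p. \<forall>k<n. S l i j k = a l i * b l j * c l k)"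
    using t by (simp add: a_def b_def c_def)
  obtain B where B: "B \<in> carrier_mat n n" "tm n (frontal_slice T 0) * B = 1\<^sub>m n"
    using assms(2) invertible_tm by blast
  define X where "X = mat n n (\<lambda>(i,l). if l < r then a l i * b l 0 else 0)"
  define Y where "Y = mat n n (\<lambda>(l,k). c l k)"
  have X: "X \<in> carrier_mat n n" and Y: "Y \<in> carrier_mat n n" by (auto simp: X_def Y_def)
  have A0: "tm n (frontal_slice T 0) = X * Y"
  proof (rule eq_matI)
    fix i k assume "i < dim_row (X*Y)" "k < dim_col (X*Y)"
    hence ik: "i<n" "k<n" by (simp_all add: X_def Y_def)
    have "(X*Y) $$ (i,k) = (\<Sum>l\<in>{0..<n}. X $$(i,l) * Y$$(l,k))"
      using ik by (simp add: X_def Y_def scalar_prod_def)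
    also have "\<dots> = (\<Sum>l\<in>{0..<n}. if l < r then a l i * b l 0 * c l k else 0)"
      using ik by (intro sum.cong) (auto simp: X_def Y_def)
    also have "\<dots> = (\<Sum>l<r. a l i * b l 0 * c l k)" using rn by (simp add: split_sum_lt)
    also have "\<dots> = (\<Sum>l<r. S l i 0 k)" using abc ik assms(1) by (intro sum.cong) auto
    also have "\<dots> = tm n (frontal_slice T 0) $$ (i,k)" using assms(4) ik assms(1) by (simp add: frontal_slice_def)
    finally show "tm n (frontal_slice T 0) $$ (i,k) = (X*Y) $$ (i,k)" by simp
  qed (auto simp: X_def Y_def)
  have "X * (Y * B) = 1\<^sub>m n" using A0 B X Y by simp
  hence YBX: "(Y * B) * X = 1\<^sub>m n" using K1 X Y B by (metis mult_carrier_mat)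
  have nn: "n - 1 < n" "r \<le> n - 1" using rn by auto
  have "((Y * B) * X) $$ (n-1, n-1) = (\<Sum>l\<in>{0..<n}. (Y*B) $$ (n-1,l) * X $$ (l, n-1))"
    using nn X Y B by (intro mult_entry) auto
  also have "\<dots> = 0" using nn by (intro sum.neutral) (auto simp: X_def)
  finally show False using YBX nn by simp
qed




lemma rank_iff:
  assumes "0 < p" "qmat_invertible n (frontal_slice T 0)"
  shows "qtensor_rank n p n T = n \<longleftrightarrow> (\<exists>S :: nat \<Rightarrow> qtensor. (\<forall>l<n. simple_qtensor n p n (S l)) \<and>
      (\<forall>i<n. \<forall>j<p. \<forall>k<n. T i j k = (\<Sum>l<n. S l i j k)))"
proof -
  define Q where "Q = (\<lambda>r. \<exists>S :: nat \<Rightarrow> qtensor. (\<forall>l<r. simple_qtensor n p n (S l)) \<and>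
      (\<forall>i<n. \<forall>j<p. \<forall>k<n. T i j k = (\<Sum>l<r. S l i j k)))"
  have R: "qtensor_rank n p n T = (LEAST r. Q r)" unfolding qtensor_rank_def Q_def ..
  have lb: "n \<le> r" if "Q r" for r
  proof -
    from that obtain S where S: "\<forall>l<r. simple_qtensor n p n (S l)"
      "\<forall>i<n. \<forall>j<p. \<forall>k<n. T i j k = (\<Sum>l<r. S l i j k)" unfolding Q_def by blast
    have "\<forall>l<r. factored n p n (S l)" using S(1) by (auto simp: simple_qtensor_def factored_def)
    from L_lower[OF assms this S(2)] show ?thesis .
  qed
  have "qtensor_rank n p n T = n \<longleftrightarrow> Q n"
  proof
    assume "qtensor_rank n p n T = n"
    moreover obtain r0 where "Q r0" using decomp_exists[of n p n T] unfolding Q_def by blast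
    hence "Q (LEAST r. Q r)" by (rule LeastI)
    ultimately show "Q n" using R by simp
  next
    assume "Q n"
    hence "(LEAST r. Q r) = n" by (rule Least_equality) (use lb in blast)
    thus "qtensor_rank n p n T = n" using R by simp
  qed
  thus ?thesis unfolding Q_def .
qed


lemma cmul[simp]: "A \<in> carrier_mat n n \<Longrightarrow> B \<in> carrier_mat n n \<Longrightarrow> A * B \<in> carrier_mat n n"
  by (rule mult_carrier_mat)

lemma assoc_n: "A \<in> carrier_mat n n \<Longrightarrow> B \<in> carrier_mat n n \<Longrightarrow> C \<in> carrier_mat n n \<Longrightarrow> (A*B)*C = A*(B*C)"
  by simp

lemma cancel_n: "(A :: quat mat) * B = 1\<^sub>m n \<Longrightarrow> A \<in> carrier_mat n n \<Longrightarrow> B \<in> carrier_mat n n \<Longrightarrow> Z \<in> carrier_mat n n \<Longrightarrow> A*(B*Z) = Z"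
proof -
  assume h: "A * B = 1\<^sub>m n" "A \<in> carrier_mat n n" "B \<in> carrier_mat n n" "Z \<in> carrier_mat n n"
  hence "A*(B*Z) = (A*B)*Z" using assoc_mult_mat[OF h(2,3,4)] by simp
  also have "\<dots> = Z" using h left_mult_one_mat[OF h(4)] by simp
  finally show ?thesis .
qed

lemma dirA:
  assumes p: "0<p" and inv: "qmat_invertible n (frontal_slice T 0)"
   and S: "\<forall>l<n. simple_qtensor n p n (S l)" "\<forall>i<n. \<forall>j<p. \<forall>k<n. T i j k = (\<Sum>l<n. S l i j k)"
  shows "\<exists>P. qmat_invertible n P \<and>
       (\<forall>j. 1 \<le> j \<and> j < p \<longrightarrow>
          qmat_diagonal n
            (qmat_mult n (qmat_inv n P)
               (qmat_mult n (qmat_mult n (frontal_slice T j) (qmat_inv n (frontal_slice T 0))) P)))"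
proof -
  have "\<forall>l. \<exists>t. l < n \<longrightarrow> (\<forall>i<n. \<forall>j<p. \<forall>k<n. S l i j k = fst t i * fst (snd t) j * snd (snd t) k)"
  proof
    fix l show "\<exists>t. l < n \<longrightarrow> (\<forall>i<n. \<forall>j<p. \<forall>k<n. S l i j k = fst t i * fst (snd t) j * snd (snd t) k)"
    proof (cases "l < n")
      case True
      hence "simple_qtensor n p n (S l)" using S(1) by simp
      hence "\<exists>a b c :: nat \<Rightarrow> quat. \<forall>i<n. \<forall>j<p. \<forall>k<n. S l i j k = a i * b j * c k"
        unfolding simple_qtensor_def by (rule conjunct2)
      then obtain a b c where "\<forall>i<n. \<forall>j<p. \<forall>k<n. S l i j k = a i * b j * c k"
        by (elim exE)
      thus ?thesis by (intro exI[of _ "(a,b,c)"]) simp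
    qed simp
  qed
  from choice[OF this] obtain t where t: "\<forall>l. l < n \<longrightarrow> (\<forall>i<n. \<forall>j<p. \<forall>k<n. S l i j k = fst (t l) i * fst (snd (t l)) j * snd (snd (t l)) k)"
    by blast
  define a where "a l = fst (t l)" for l
  define b where "b l = fst (snd (t l))" for l
  define c where "c l = snd (snd (t l))" for l
  have abc: "\<And>l i j k. l<n \<Longrightarrow> i<n \<Longrightarrow> j<p \<Longrightarrow> k<n \<Longrightarrow> S l i j k = a l i * b l j * c l k"
    using t by (simp add: a_def b_def c_def)
  have as[simp]: "\<And>A B (C :: quat mat). A \<in> carrier_mat n n \<Longrightarrow> B \<in> carrier_mat n n \<Longrightarrow> C \<in> carrier_mat n n \<Longrightarrow> (A*B)*C = A*(B*C)"
    by (rule assoc_mult_mat)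
  have l1[simp]: "\<And>Z :: quat mat. Z \<in> carrier_mat n n \<Longrightarrow> 1\<^sub>m n * Z = Z" by (rule left_mult_one_mat)
  have r1[simp]: "\<And>Z :: quat mat. Z \<in> carrier_mat n n \<Longrightarrow> Z * 1\<^sub>m n = Z" by (rule right_mult_one_mat)
  define Bq where "Bq = qmat_inv n (frontal_slice T 0)"
  define A where "A j = tm n (frontal_slice T j)" for j
  define Bi where "Bi = tm n Bq"
  have AB: "A 0 * Bi = 1\<^sub>m n" using inv_tm[OF inv] by (simp add: A_def Bi_def Bq_def)
  define X where "X = mat n n (\<lambda>(i,l). a l i)"
  define D where "D j = mat n n (\<lambda>(l,m). if l = m then b l j else 0)" for j
  define Y where "Y = mat n n (\<lambda>(l,k). c l k)"
  have cX: "X \<in> carrier_mat n n" and cY: "Y \<in> carrier_mat n n" and cD: "D j \<in> carrier_mat n n"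
    and cA: "A j \<in> carrier_mat n n" and cBi: "Bi \<in> carrier_mat n n" for j
    by (auto simp: X_def Y_def D_def A_def Bi_def)
  have dD: "diagonal_mat (D j)" for j by (auto simp: D_def diagonal_mat_def)
  have Afact: "A j = X * D j * Y" if j: "j < p" for j
  proof (rule eq_matI)
    fix i k assume "i < dim_row (X * D j * Y)" "k < dim_col (X * D j * Y)"
    hence ik: "i<n" "k<n" using cX cY by auto
    have "(X * D j * Y) $$ (i,k) = (\<Sum>l\<in>{0..<n}. (X * D j) $$ (i,l) * Y $$ (l,k))"
      by (rule mult_entry) (use cX cD cY ik in auto)
    also have "\<dots> = (\<Sum>l\<in>{0..<n}. a l i * b l j * c l k)"
      using diag_mult_right[OF cD dD cX] ik by (intro sum.cong) (auto simp: X_def D_def Y_def)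
    also have "\<dots> = (\<Sum>l<n. S l i j k)"
      using abc ik j by (auto simp: atLeast0LessThan intro!: sum.cong)
    also have "\<dots> = A j $$ (i,k)" using S(2) ik j by (simp add: A_def frontal_slice_def)
    finally show "A j $$ (i,k) = (X * D j * Y) $$ (i,k)" by simp
  qed (use cX cY in \<open>auto simp: A_def\<close>)
  define R where "R = D 0 * Y * Bi"
  have cR: "R \<in> carrier_mat n n" using cD cY cBi by (simp add: R_def)
  have XR: "X * R = 1\<^sub>m n"
  proof -
    have "X * R = X * D 0 * Y * Bi" using cX cD cY cBi by (simp add: R_def)
    also have "\<dots> = 1\<^sub>m n" using Afact[OF p] AB by simp
    finally show ?thesis .
  qed
  have RX: "R * X = 1\<^sub>m n" using K1[OF cX cR XR] .
  have invP: "qmat_invertible n (fm X)" unfolding invertible_tm tm_fm[OF cX] using cR XR by blast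
  define Qm where "Qm = tm n (qmat_inv n (fm X))"
  have cQ: "Qm \<in> carrier_mat n n" by (simp add: Qm_def)
  have QX: "Qm * X = 1\<^sub>m n" using inv_tm(2)[OF invP] tm_fm[OF cX] by (simp add: Qm_def)
  have QR: "Qm = R"
  proof -
    have "Qm = Qm * (X * R)" using XR cQ by simp
    also have "\<dots> = (Qm * X) * R" using cQ cX cR by simp
    also have "\<dots> = R" using QX cR by simp
    finally show ?thesis .
  qed
  define E where "E = Y * Bi * X"
  have cE: "E \<in> carrier_mat n n" using cY cBi cX by (simp add: E_def)
  have DE: "D 0 * E = 1\<^sub>m n"
  proof -
    have "D 0 * E = R * X" using cD cY cBi cX by (simp add: E_def R_def)
    thus ?thesis using RX by simp
  qed
  have dE: "diagonal_mat E" unfolding diagonal_mat_def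
  proof (intro allI impI)
    fix l k assume lk: "l < dim_row E" "k < dim_col E" "l \<noteq> k"
    hence lk': "l < n" "k < n" using cE by auto
    have e: "(D 0 * E) $$ (l,m) = b l 0 * E $$ (l,m)" if "m < n" for m
      using diag_mult_left[OF cD dD cE lk'(1) that] lk' by (simp add: D_def)
    have "b l 0 * E $$ (l,l) = 1" using e[of l] DE lk' by simp
    hence "b l 0 \<noteq> 0" by auto
    moreover have "b l 0 * E $$ (l,k) = 0" using e[of k] DE lk' lk(3) by simp
    ultimately show "E $$ (l,k) = 0" using quat_no_zero_div by blast
  qed
  have "qmat_diagonal n
            (qmat_mult n (qmat_inv n (fm X))
               (qmat_mult n (qmat_mult n (frontal_slice T j) Bq) (fm X)))" if j: "1 \<le> j" "j < p" for j
  proof -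
    have "tm n (qmat_mult n (qmat_inv n (fm X))
               (qmat_mult n (qmat_mult n (frontal_slice T j) Bq) (fm X))) = R * (A j * Bi * X)"
      by (simp add: tm_mult tm_fm[OF cX] QR[symmetric] Qm_def A_def Bi_def)
    also have "\<dots> = R * (X * D j * Y * Bi * X)" using Afact j by simp
    also have "\<dots> = (R * X) * (D j * E)" using cR cX cD cY cBi by (simp add: E_def)
    also have "\<dots> = D j * E" using RX cD cE by simp
    finally show ?thesis unfolding tm_diag using diag_mult[OF cD dD cE dE] by simp
  qed
  thus ?thesis using invP unfolding Bq_def by blast
qed


lemma dirB:
  assumes p: "0<p" and inv: "qmat_invertible n (frontal_slice T 0)"
   and Pinv: "qmat_invertible n P"
   and Pd: "\<forall>j. 1 \<le> j \<and> j < p \<longrightarrow>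
          qmat_diagonal n
            (qmat_mult n (qmat_inv n P)
               (qmat_mult n (qmat_mult n (frontal_slice T j) (qmat_inv n (frontal_slice T 0))) P))"
  shows "\<exists>S :: nat \<Rightarrow> qtensor. (\<forall>l<n. simple_qtensor n p n (S l)) \<and>
      (\<forall>i<n. \<forall>j<p. \<forall>k<n. T i j k = (\<Sum>l<n. S l i j k))"
proof -
  have as[simp]: "\<And>A B (C :: quat mat). A \<in> carrier_mat n n \<Longrightarrow> B \<in> carrier_mat n n \<Longrightarrow> C \<in> carrier_mat n n \<Longrightarrow> (A*B)*C = A*(B*C)"
    by (rule assoc_mult_mat)
  have l1[simp]: "\<And>Z :: quat mat. Z \<in> carrier_mat n n \<Longrightarrow> 1\<^sub>m n * Z = Z" by (rule left_mult_one_mat)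
  have r1[simp]: "\<And>Z :: quat mat. Z \<in> carrier_mat n n \<Longrightarrow> Z * 1\<^sub>m n = Z" by (rule right_mult_one_mat)
  define A where "A j = tm n (frontal_slice T j)" for j
  define Bi where "Bi = tm n (qmat_inv n (frontal_slice T 0))"
  define Pm where "Pm = tm n P"
  define Qm where "Qm = tm n (qmat_inv n P)"
  have cA: "A j \<in> carrier_mat n n" and cBi: "Bi \<in> carrier_mat n n" and cP: "Pm \<in> carrier_mat n n"
    and cQ: "Qm \<in> carrier_mat n n" for j by (auto simp: A_def Bi_def Pm_def Qm_def)
  have BA: "Bi * A 0 = 1\<^sub>m n" using inv_tm[OF inv] by (simp add: A_def Bi_def)
  have PQ: "Pm * Qm = 1\<^sub>m n" using inv_tm[OF Pinv] by (simp add: Pm_def Qm_def)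
  define D where "D j = Qm * (A j * Bi * Pm)" for j
  have cD: "D j \<in> carrier_mat n n" for j using cA cBi cP cQ by (simp add: D_def)
  have dD: "diagonal_mat (D j)" if "1 \<le> j" "j < p" for j
  proof -
    have "qmat_diagonal n (qmat_mult n (qmat_inv n P)
               (qmat_mult n (qmat_mult n (frontal_slice T j) (qmat_inv n (frontal_slice T 0))) P))"
      using Pd that by blast
    thus ?thesis by (simp add: tm_diag tm_mult D_def A_def Bi_def Pm_def Qm_def)
  qed
  define Y where "Y = Qm * A 0"
  have cY: "Y \<in> carrier_mat n n" using cQ cA by (simp add: Y_def)
  define S where "S l = (\<lambda>i j k. P i l * (if j = 0 then 1 else D j $$ (l,l)) * Y $$ (l,k))" for l
  have fac: "\<forall>l<n. factored n p n (S l)"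
  proof (intro allI impI)
    fix l
    show "factored n p n (S l)" unfolding factored_def
      by (rule exI[of _ "\<lambda>i. P i l"], rule exI[of _ "\<lambda>j. if j = 0 then 1 else D j $$ (l,l)"],
          rule exI[of _ "\<lambda>k. Y $$ (l,k)"]) (simp add: S_def)
  qed
  have dec: "\<forall>i<n. \<forall>j<p. \<forall>k<n. T i j k = (\<Sum>l<n. S l i j k)"
  proof (intro allI impI)
    fix i j k assume ijk: "i<n" "j<p" "k<n"
    show "T i j k = (\<Sum>l<n. S l i j k)"
    proof (cases "j = 0")
      case True
      have "Pm * Y = A 0" using PQ cP cQ cA by (simp add: Y_def flip: as)
      hence "T i j k = (Pm * Y) $$ (i,k)" using True ijk by (simp add: A_def frontal_slice_def)
      also have "\<dots> = (\<Sum>l\<in>{0..<n}. Pm $$ (i,l) * Y $$ (l,k))" by (rule mult_entry) (use cP cY ijk in auto)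
      also have "\<dots> = (\<Sum>l<n. S l i j k)" using True ijk
        by (auto simp: S_def Pm_def atLeast0LessThan intro!: sum.cong)
      finally show ?thesis .
    next
      case False
      have "Pm * D j * Y = Pm * Qm * A j * Bi * (Pm * Qm) * A 0" using cP cQ cA cBi by (simp add: D_def Y_def)
      also have "\<dots> = A j" using PQ BA cA cBi by simp
      finally have "T i j k = (Pm * D j * Y) $$ (i,k)" using ijk by (simp add: A_def frontal_slice_def)
      also have "\<dots> = (\<Sum>l\<in>{0..<n}. (Pm * D j) $$ (i,l) * Y $$ (l,k))" by (rule mult_entry) (use cP cD cY ijk in auto)
      also have "\<dots> = (\<Sum>l<n. S l i j k)" using False ijk diag_mult_right[OF cD dD cP]
        by (auto simp: S_def Pm_def atLeast0LessThan intro!: sum.cong)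
      finally show ?thesis .
    qed
  qed
  obtain r' S' where r': "r' \<le> n" "\<forall>l<r'. simple_qtensor n p n (S' l)"
      "\<forall>i<n. \<forall>j<p. \<forall>k<n. T i j k = (\<Sum>l<r'. S' l i j k)"
    using L_drop[OF fac dec] by blast
  have "\<forall>l<r'. factored n p n (S' l)" using r'(2) by (auto simp: simple_qtensor_def factored_def)
  from L_lower[OF p inv this r'(3)] r'(1) have "r' = n" by simp
  thus ?thesis using r' by blast
qed

theorem mainTheorem3:
  fixes n p :: nat and T :: qtensor
  assumes "p \<ge> 1"
    and "qmat_invertible n (frontal_slice T 0)"
  shows "qtensor_rank n p n T = n \<longleftrightarrow>
    (\<exists>P. qmat_invertible n P \<and>
       (\<forall>j. 1 \<le> j \<and> j < p \<longrightarrow>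
          qmat_diagonal n
            (qmat_mult n (qmat_inv n P)
               (qmat_mult n (qmat_mult n (frontal_slice T j) (qmat_inv n (frontal_slice T 0))) P))))"
proof -
  have p: "0 < p" using assms(1) by simp
  show ?thesis unfolding rank_iff[OF p assms(2)]
  proof
    assume "\<exists>S :: nat \<Rightarrow> qtensor. (\<forall>l<n. simple_qtensor n p n (S l)) \<and>
      (\<forall>i<n. \<forall>j<p. \<forall>k<n. T i j k = (\<Sum>l<n. S l i j k))"
    then obtain S :: "nat \<Rightarrow> qtensor" where "\<forall>l<n. simple_qtensor n p n (S l)"
      "\<forall>i<n. \<forall>j<p. \<forall>k<n. T i j k = (\<Sum>l<n. S l i j k)" by blast
    from dirA[OF p assms(2) this] show "\<exists>P. qmat_invertible n P \<and>
       (\<forall>j. 1 \<le> j \<and> j < p \<longrightarrow>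
          qmat_diagonal n
            (qmat_mult n (qmat_inv n P)
               (qmat_mult n (qmat_mult n (frontal_slice T j) (qmat_inv n (frontal_slice T 0))) P)))" .
  next
    assume "\<exists>P. qmat_invertible n P \<and>
       (\<forall>j. 1 \<le> j \<and> j < p \<longrightarrow>
          qmat_diagonal n
            (qmat_mult n (qmat_inv n P)
               (qmat_mult n (qmat_mult n (frontal_slice T j) (qmat_inv n (frontal_slice T 0))) P)))"
    then obtain P where "qmat_invertible n P" "\<forall>j. 1 \<le> j \<and> j < p \<longrightarrow>
          qmat_diagonal n
            (qmat_mult n (qmat_inv n P)
               (qmat_mult n (qmat_mult n (frontal_slice T j) (qmat_inv n (frontal_slice T 0))) P))" by blast
    from dirB[OF p assms(2) this] show "\<exists>S :: nat \<Rightarrow> qtensor. (\<forall>l<n. simple_qtensor n p n (S l)) \<and>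
      (\<forall>i<n. \<forall>j<p. \<forall>k<n. T i j k = (\<Sum>l<n. S l i j k))" .
  qed
qed

end
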